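(* Let $\hat{\mathcal U}(\mathfrak L)$ (resp. $\hat{\mathcal U}(\mathfrak H)$) be the subgroup of $PSL(2,\mathfrak L)$ (resp. $PSL(2,\mathfrak H)$) consisting of the elements that fix the point $1\in\mathbf H^1_{\mathbb H}$. Then $\hat{\mathcal U}(\mathfrak L)$ is generated by $T$ and $\mathcal U(\mathfrak L)$, and $\hat{\mathcal U}(\mathfrak H)$ is generated by $T$ and $\mathcal U(\mathfrak H)$. Moreover $T$ commutes with every element of $\mathcal U(\mathfrak H)$, so that $\hat{\mathcal U}(\mathfrak L)\cong\mathbb Z/2\mathbb Z\oplus\mathcal U(\mathfrak L)$ and $\hat{\mathcal U}(\mathfrak H)\cong\mathbb Z/2\mathbb Z\oplus\mathcal U(\mathfrak H)$.
   Context: $\mathbb H$ is the real quaternions, $\mathbf H^1_{\mathbb H}=\{q\in\mathbb H:\Re q>0\}$. Quaternionic matrices act by $q\mapsto(aq+b)(cq+d)^{-1}$, modulo nonzero real scalars. $\Im\mathbb H(\mathbb Z)=\{b\mathbf i+c\mathbf j+d\mathbf k:b,c,d\in\mathbb Z\}$; $\tau_\omega(q)=q+\omega$; $T(q)=q^{-1}$ (matrix $\begin{pmatrix}0&1\\1&0\end{pmatrix}$). Lipschitz units: $\pm1,\pm\mathbf i,\pm\mathbf j,\pm\mathbf k$; Hurwitz units: these together with $\frac12(\pm1\pm\mathbf i\pm\mathbf j\pm\mathbf k)$. For a unit $u$, $D_u=\begin{pmatrix}u&0\\0&u\end{pmatrix}$ acts by $q\mapsto uqu^{-1}$. $\mathcal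 U(\mathfrak L)=\{D_u:u\text{ Lipschitz unit}\}\cong\mathbb Z/2\mathbb Z\oplus\mathbb Z/2\mathbb Z$ and $\mathcal U(\mathfrak H)=\{D_u:u\text{ Hurwitz unit}\}$ (order 12). $PSL(2,\mathfrak L)$ is generated by $T$ and the $\tau_\omega$, $\omega\in\Im\mathbb H(\mathbb Z)$; $PSL(2,\mathfrak H)$ is generated by $T$, the $\tau_\omega$ and $\mathcal U(\mathfrak H)$. *)

theory Defs
  imports Complex_Main "HOL-Algebra.Algebra"
begin

datatype quat = Quat (qre: real) (qi: real) (qj: real) (qk: real)

definition qadd :: "quat \<Rightarrow> quat \<Rightarrow> quat" where
  "qadd p q = Quat (qre p + qre q) (qi p + qi q) (qj p + qj q) (qk p + qk q)"

definition qneg :: "quat \<Rightarrow> quat" where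
  "qneg p = Quat (- qre p) (- qi p) (- qj p) (- qk p)"

definition qmul :: "quat \<Rightarrow> quat \<Rightarrow> quat" where
  "qmul p q = Quat
     (qre p * qre q - qi p * qi q - qj p * qj q - qk p * qk q)
     (qre p * qi q + qi p * qre q + qj p * qk q - qk p * qj q)
     (qre p * qj q - qi p * qk q + qj p * qre q + qk p * qi q)
     (qre p * qk q + qi p * qj q - qj p * qi q + qk p * qre q)"

definition qnormsq :: "quat \<Rightarrow> real" where
  "qnormsq p = (qre p)\<^sup>2 + (qi p)\<^sup>2 + (qj p)\<^sup>2 + (qk p)\<^sup>2"

text \<open>Inverse (conjugate divided by squared norm; 0 is sent to 0).\<close>
definition qinv :: "quat \<Rightarrow> quat" where
  "qinv p = Quat (qre p / qnormsq p) (- qi p / qnormsq p) (- qj p / qnormsq p) (- qk p / qnormsq p)"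

definition qreal :: "real \<Rightarrow> quat" where
  "qreal r = Quat r 0 0 0"

definition qzero :: quat where "qzero = Quat 0 0 0 0"
definition qone :: quat where "qone = Quat 1 0 0 0"

definition ImHZ :: "quat set" where
  "ImHZ = {Quat 0 (of_int b) (of_int c) (of_int d) | b c d. True}"

definition lipschitz_units :: "quat set" where
  "lipschitz_units = {Quat 1 0 0 0, Quat (-1) 0 0 0, Quat 0 1 0 0, Quat 0 (-1) 0 0,
                      Quat 0 0 1 0, Quat 0 0 (-1) 0, Quat 0 0 0 1, Quat 0 0 0 (-1)}"

definition hurwitz_units :: "quat set" where
  "hurwitz_units = lipschitz_units \<union>
     {Quat a b c d | a b c d. a \<in> {1/2, -1/2} \<and> b \<in> {1/2, -1/2} \<and> c \<in> {1/2, -1/2} \<and> d \<in> {1/2, -1/2}}"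

text \<open>\<open>QM a b c d\<close> is the matrix with rows (a b) and (c d).\<close>
datatype qmat = QM quat quat quat quat

fun mmul :: "qmat \<Rightarrow> qmat \<Rightarrow> qmat" where
  "mmul (QM a b c d) (QM a' b' c' d') =
     QM (qadd (qmul a a') (qmul b c')) (qadd (qmul a b') (qmul b d'))
        (qadd (qmul c a') (qmul d c')) (qadd (qmul c b') (qmul d d'))"

fun mscale :: "real \<Rightarrow> qmat \<Rightarrow> qmat" where
  "mscale r (QM a b c d) = QM (qmul (qreal r) a) (qmul (qreal r) b) (qmul (qreal r) c) (qmul (qreal r) d)"

definition mid :: qmat where "mid = QM qone qzero qzero qone"

definition minvertible :: "qmat \<Rightarrow> bool" where
  "minvertible M \<longleftrightarrow> (\<exists>N. mmul M N = mid \<and> mmul N M = mid)"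

fun mob :: "qmat \<Rightarrow> quat \<Rightarrow> quat" where
  "mob (QM a b c d) q = qmul (qadd (qmul a q) b) (qinv (qadd (qmul c q) d))"

definition Tm :: qmat where "Tm = QM qzero qone qone qzero"
definition taum :: "quat \<Rightarrow> qmat" where "taum w = QM qone w qzero qone"
definition Dm :: "quat \<Rightarrow> qmat" where "Dm u = QM u qzero qzero u"

definition cls :: "qmat \<Rightarrow> qmat set" where
  "cls M = {mscale r M | r. r \<noteq> 0}"

definition pgl_mult :: "qmat set \<Rightarrow> qmat set \<Rightarrow> qmat set" where
  "pgl_mult A B = {mmul m n | m n. m \<in> A \<and> n \<in> B}"

definition PGL :: "qmat set monoid" where
  "PGL = \<lparr> carrier = cls ` {M. minvertible M},
           monoid.mult = pgl_mult,
           one = cls mid \<rparr>"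

definition PSL2L :: "qmat set set" where
  "PSL2L = generate PGL ({cls Tm} \<union> {cls (taum w) | w. w \<in> ImHZ})"

definition UL :: "qmat set set" where
  "UL = {cls (Dm u) | u. u \<in> lipschitz_units}"

definition UH :: "qmat set set" where
  "UH = {cls (Dm u) | u. u \<in> hurwitz_units}"

definition PSL2H :: "qmat set set" where
  "PSL2H = generate PGL ({cls Tm} \<union> {cls (taum w) | w. w \<in> ImHZ} \<union> UH)"

text \<open>Stabilisers of the point 1 (the action is independent of the representative).\<close>
definition UhatL :: "qmat set set" where
  "UhatL = {A \<in> PSL2L. \<forall>m \<in> A. mob m qone = qone}"

definition UhatH :: "qmat set set" where
  "UhatH = {A \<in> PSL2H. \<forall>m \<in> A. mob m qone = qone}"

end

theory Submission
  imports Defs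
begin


lemma quat_eq_iff: "p = q \<longleftrightarrow> qre p = qre q \<and> qi p = qi q \<and> qj p = qj q \<and> qk p = qk q"
  by (cases p; cases q) auto

instantiation quat :: ring_1
begin
definition zero_quat_def: "0 = qzero"
definition one_quat_def: "1 = qone"
definition plus_quat_def: "p + q = qadd p q"
definition uminus_quat_def: "- p = qneg p"
definition minus_quat_def: "p - q = qadd p (qneg q)"
definition times_quat_def: "p * q = qmul p q"
instance
  by standard (simp_all add: quat_eq_iff zero_quat_def one_quat_def plus_quat_def uminus_quat_def
      minus_quat_def times_quat_def qadd_def qneg_def qmul_def qzero_def qone_def algebra_simps)
end

lemma qsel_simps[simp]:
  "qre (p + q) = qre p + qre q" "qi (p + q) = qi p + qi q" "qj (p + q) = qj p + qj q" "qk (p + q) = qk p + qk q"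
  "qre (p - q) = qre p - qre q" "qi (p - q) = qi p - qi q" "qj (p - q) = qj p - qj q" "qk (p - q) = qk p - qk q"
  "qre (- p) = - qre p" "qi (- p) = - qi p" "qj (- p) = - qj p" "qk (- p) = - qk p"
  "qre 0 = 0" "qi 0 = 0" "qj 0 = 0" "qk 0 = 0"
  "qre 1 = 1" "qi 1 = 0" "qj 1 = 0" "qk 1 = 0"
  "qre (p * q) = qre p * qre q - qi p * qi q - qj p * qj q - qk p * qk q"
  "qi (p * q) = qre p * qi q + qi p * qre q + qj p * qk q - qk p * qj q"
  "qj (p * q) = qre p * qj q - qi p * qk q + qj p * qre q + qk p * qi q"
  "qk (p * q) = qre p * qk q + qi p * qj q - qj p * qi q + qk p * qre q"
  by (simp_all add: zero_quat_def one_quat_def plus_quat_def uminus_quat_def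
      minus_quat_def times_quat_def qadd_def qneg_def qmul_def qzero_def qone_def)

lemma qops: "qadd p q = p + q" "qmul p q = p * q" "qzero = 0" "qone = 1" "qneg p = - p"
  by (simp_all add: zero_quat_def one_quat_def plus_quat_def uminus_quat_def times_quat_def)

definition cnj :: "quat \<Rightarrow> quat" where "cnj q = Quat (qre q) (- qi q) (- qj q) (- qk q)"

lemma cnj_sel[simp]: "qre (cnj q) = qre q" "qi (cnj q) = - qi q" "qj (cnj q) = - qj q" "qk (cnj q) = - qk q"
  by (simp_all add: cnj_def)

lemma cnj_mult: "cnj (p * q) = cnj q * cnj p" by (simp add: quat_eq_iff algebra_simps)
lemma cnj_add: "cnj (p + q) = cnj p + cnj q" by (simp add: quat_eq_iff)
lemma cnj_cnj[simp]: "cnj (cnj p) = p" by (simp add: quat_eq_iff)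
lemma cnj_0[simp]: "cnj 0 = 0" and cnj_1[simp]: "cnj 1 = 1" by (simp_all add: quat_eq_iff)

lemma qreal_sel[simp]: "qre (qreal r) = r" "qi (qreal r) = 0" "qj (qreal r) = 0" "qk (qreal r) = 0"
  by (simp_all add: qreal_def)
lemma qreal_comm: "qreal r * q = q * qreal r" by (simp add: quat_eq_iff)
lemma qreal_mult: "qreal r * qreal s = qreal (r * s)" by (simp add: quat_eq_iff)
lemma qreal_1[simp]: "qreal 1 = 1" by (simp add: quat_eq_iff)
lemma cnj_mult_self: "cnj q * q = qreal (qnormsq q)" "q * cnj q = qreal (qnormsq q)"
  by (simp_all add: quat_eq_iff qnormsq_def power2_eq_square algebra_simps)

lemma qinv_eq: "qinv q = qreal (1 / qnormsq q) * cnj q"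
  by (simp add: quat_eq_iff qinv_def)

lemma qinv_left: "q \<noteq> 0 \<Longrightarrow> qinv q * q = 1"
proof -
  assume "q \<noteq> 0"
  hence n: "qnormsq q \<noteq> 0" unfolding qnormsq_def
    by (auto simp: quat_eq_iff add_nonneg_eq_0_iff)
  have "qinv q * q = qreal (1 / qnormsq q) * qreal (qnormsq q)"
    by (simp add: qinv_eq mult.assoc cnj_mult_self)
  also have "\<dots> = 1" using n by (simp add: qreal_mult)
  finally show ?thesis .
qed
lemma qinv_0: "qinv 0 = 0" by (simp add: quat_eq_iff qinv_def)



declare mmul.simps[simp del] mscale.simps[simp del]

lemma mmul_QM[simp]: "mmul (QM a b c d) (QM a' b' c' d') =
     QM (a * a' + b * c') (a * b' + b * d') (c * a' + d * c') (c * b' + d * d')"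
  by (simp add: mmul.simps qops)

lemma mscale_QM[simp]: "mscale r (QM a b c d) = QM (qreal r * a) (qreal r * b) (qreal r * c) (qreal r * d)"
  by (simp add: mscale.simps qops)

lemma mid_QM: "mid = QM 1 0 0 1" by (simp add: mid_def qops)

lemma mmul_assoc: "mmul (mmul M N) P = mmul M (mmul N P)"
  by (cases M; cases N; cases P) (simp add: algebra_simps)

lemma mmul_mid[simp]: "mmul mid M = M" "mmul M mid = M"
  by (cases M; simp add: mid_QM)+

lemma mscale_mmul: "mmul (mscale r M) (mscale s N) = mscale (r * s) (mmul M N)"
proof (cases M; cases N)
  fix a b c d a' b' c' d' assume "M = QM a b c d" "N = QM a' b' c' d'"
  moreover have "\<And>x y. qreal r * x * (qreal s * y) = qreal (r*s) * (x * y)"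
    by (metis mult.assoc qreal_comm qreal_mult)
  ultimately show ?thesis by (simp add: distrib_left)
qed

lemma mscale_mscale: "mscale r (mscale s M) = mscale (r * s) M"
  by (cases M) (simp add: mult.assoc[symmetric] qreal_mult)

lemma mscale_1[simp]: "mscale 1 M = M" by (cases M) simp

lemma mem_cls: "M \<in> cls M" unfolding cls_def by (rule CollectI, rule exI[of _ 1]) simp

lemma cls_mscale: "r \<noteq> 0 \<Longrightarrow> cls (mscale r M) = cls M"
proof -
  assume r: "r \<noteq> 0"
  show ?thesis unfolding cls_def
  proof (rule Set.set_eqI, rule iffI)
    fix x assume "x \<in> {mscale s (mscale r M) |s. s \<noteq> 0}"
    then obtain s where "x = mscale (s * r) M" "s \<noteq> 0" by (auto simp: mscale_mscale)
    then show "x \<in> {mscale s M |s. s \<noteq> 0}" using r by auto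
  next
    fix x assume "x \<in> {mscale s M |s. s \<noteq> 0}"
    then obtain s where "x = mscale s M" "s \<noteq> 0" by auto
    then have "x = mscale (s / r) (mscale r M)" "s / r \<noteq> 0" using r by (auto simp: mscale_mscale)
    then show "x \<in> {mscale s (mscale r M) |s. s \<noteq> 0}" by blast
  qed
qed

lemma pgl_mult_cls: "pgl_mult (cls M) (cls N) = cls (mmul M N)"
proof (rule Set.set_eqI, rule iffI)
  fix x assume "x \<in> pgl_mult (cls M) (cls N)"
  then obtain r s where "x = mmul (mscale r M) (mscale s N)" "r \<noteq> 0" "s \<noteq> 0"
    unfolding pgl_mult_def cls_def by auto
  then show "x \<in> cls (mmul M N)" unfolding cls_def by (auto simp: mscale_mmul)
next
  fix x assume "x \<in> cls (mmul M N)"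
  then obtain r where "x = mscale r (mmul M N)" "r \<noteq> 0" unfolding cls_def by auto
  then have "x = mmul (mscale r M) N" "mscale r M \<in> cls M" "N \<in> cls N"
    using mscale_mmul[of r M 1 N] mem_cls[of N] by (auto simp: cls_def)
  then show "x \<in> pgl_mult (cls M) (cls N)" unfolding pgl_mult_def by blast
qed

lemma minvertible_mmul: "minvertible M \<Longrightarrow> minvertible N \<Longrightarrow> minvertible (mmul M N)"
  unfolding minvertible_def
  by (metis mmul_assoc mmul_mid)

lemma minvertible_mid: "minvertible mid" unfolding minvertible_def by (rule exI[of _ mid]) simp

lemma PGL_simps[simp]: "carrier PGL = cls ` {M. minvertible M}" "one PGL = cls mid"
  "cls M \<otimes>\<^bsub>PGL\<^esub> cls N = cls (mmul M N)"
  by (simp_all add: PGL_def pgl_mult_cls)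

lemma cls_carrier: "minvertible M \<Longrightarrow> cls M \<in> carrier PGL"
  by simp

lemma group_PGL: "group PGL"
proof (rule groupI)
  fix x y assume "x \<in> carrier PGL" "y \<in> carrier PGL"
  then show "x \<otimes>\<^bsub>PGL\<^esub> y \<in> carrier PGL" by (auto intro: minvertible_mmul)
next
  show "\<one>\<^bsub>PGL\<^esub> \<in> carrier PGL" using minvertible_mid by simp
next
  fix x y z assume "x \<in> carrier PGL" "y \<in> carrier PGL" "z \<in> carrier PGL"
  then show "x \<otimes>\<^bsub>PGL\<^esub> y \<otimes>\<^bsub>PGL\<^esub> z = x \<otimes>\<^bsub>PGL\<^esub> (y \<otimes>\<^bsub>PGL\<^esub> z)"
    by (auto simp: mmul_assoc)
next
  fix x assume "x \<in> carrier PGL" then show "\<one>\<^bsub>PGL\<^esub> \<otimes>\<^bsub>PGL\<^esub> x = x" by auto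
next
  fix x assume "x \<in> carrier PGL"
  then obtain M where x: "x = cls M" and "minvertible M" by auto
  then obtain N where "mmul M N = mid" "mmul N M = mid" unfolding minvertible_def by auto
  then have "minvertible N" unfolding minvertible_def by auto
  then have "cls N \<in> carrier PGL" by (rule cls_carrier)
  moreover have "cls N \<otimes>\<^bsub>PGL\<^esub> x = \<one>\<^bsub>PGL\<^esub>" using x \<open>mmul N M = mid\<close> by simp
  ultimately show "\<exists>y\<in>carrier PGL. y \<otimes>\<^bsub>PGL\<^esub> x = \<one>\<^bsub>PGL\<^esub>" by blast
qed

interpretation P: group PGL by (rule group_PGL)

lemma inv_cls: "mmul N M = mid \<Longrightarrow> mmul M N = mid \<Longrightarrow> inv\<^bsub>PGL\<^esub> (cls M) = cls N"
  apply (rule P.inv_equality)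
  apply simp
  by (rule cls_carrier, unfold minvertible_def, blast)+

lemma cls_in_carrier: "mmul N M = mid \<Longrightarrow> mmul M N = mid \<Longrightarrow> cls M \<in> carrier PGL"
  by (rule cls_carrier, unfold minvertible_def, blast)



lemma Quat_mult: "Quat a b c d * Quat e f g h = Quat (a*e - b*f - c*g - d*h) (a*f + b*e + c*h - d*g)
   (a*g - b*h + c*e + d*f) (a*h + b*g - c*f + d*e)"
  by (simp add: quat_eq_iff)

lemma cnj_Quat: "cnj (Quat a b c d) = Quat a (-b) (-c) (-d)" by (simp add: cnj_def)

lemma lip_mult: "u \<in> lipschitz_units \<Longrightarrow> v \<in> lipschitz_units \<Longrightarrow> u * v \<in> lipschitz_units"
  unfolding lipschitz_units_def by (auto simp: Quat_mult)

definition HL :: "quat list" where "HL = [Quat 1 0 0 0, Quat (-1) 0 0 0, Quat 0 1 0 0, Quat 0 (-1) 0 0, Quat 0 0 1 0, Quat 0 0 (-1) 0, Quat 0 0 0 1, Quat 0 0 0 (-1), Quat (1/2) (1/2) (1/2) (1/2), Quat (1/2) (1/2) (1/2) (-1/2), Quat (1/2) (1/2) (-1/2) (1/2), Quat (1/2) (1/2) (-1/2) (-1/2), Quat (1/2) (-1/2) (1/2) (1/2), Quat (1/2) (-1/2) (1/2) (-1/2), Quat (1/2) (-1/2) (-1/2) (1/2), Quat (1/2) (-1/2) (-1/2) (-1/2), Quat (-1/2) (1/2) (1/2) (1/2), Quat (-1/2) (1/2) (1/2) (-1/2), Quat (-1/2) (1/2) (-1/2) (1/2), Quat (-1/2) (1/2)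 (-1/2) (-1/2), Quat (-1/2) (-1/2) (1/2) (1/2), Quat (-1/2) (-1/2) (1/2) (-1/2), Quat (-1/2) (-1/2) (-1/2) (1/2), Quat (-1/2) (-1/2) (-1/2) (-1/2)]"

lemma half_mem: "a \<in> {1/2, -1/2} \<Longrightarrow> b \<in> {1/2, -1/2} \<Longrightarrow> c \<in> {1/2, -1/2} \<Longrightarrow> d \<in> {1/2, -1/2}
   \<Longrightarrow> Quat a b c d \<in> hurwitz_units"
  unfolding hurwitz_units_def by blast

lemma lip_sub: "lipschitz_units \<subseteq> hurwitz_units" unfolding hurwitz_units_def by blast

lemma HL_sub: "set HL \<subseteq> hurwitz_units"
  unfolding HL_def
  apply (simp only: set_simps insert_subset empty_subsetI simp_thms)
  apply (intro conjI)
  by ((rule half_mem, simp, simp, simp, simp) | (rule subsetD[OF lip_sub], simp add: lipschitz_units_def))+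

lemma HL_sup: "hurwitz_units \<subseteq> set HL"
proof
  fix x assume "x \<in> hurwitz_units"
  then consider "x \<in> lipschitz_units" | a b c d where "x = Quat a b c d" "a = 1/2 \<or> a = -1/2"
     "b = 1/2 \<or> b = -1/2" "c = 1/2 \<or> c = -1/2" "d = 1/2 \<or> d = -1/2"
    unfolding hurwitz_units_def by blast
  then show "x \<in> set HL"
  proof cases
    case 1 then show ?thesis unfolding lipschitz_units_def HL_def by (elim insertE; simp)
  next
    case 2 then show ?thesis unfolding HL_def by (elim disjE; simp)
  qed
qed

lemma hurwitz_units_HL: "hurwitz_units = set HL" using HL_sub HL_sup by blast

definition Hint :: "(int \<times> int \<times> int \<times> int) list" where "Hint = [(2,0,0,0), (-2,0,0,0), (0,2,0,0), (0,-2,0,0), (0,0,2,0), (0,0,-2,0), (0,0,0,2), (0,0,0,-2), (1,1,1,1), (1,1,1,-1), (1,1,-1,1), (1,1,-1,-1), (1,-1,1,1), (1,-1,1,-1), (1,-1,-1,1), (1,-1,-1,-1), (-1,1,1,1), (-1,1,1,-1), (-1,1,-1,1), (-1,1,-1,-1), (-1,-1,1,1), (-1,-1,1,-1), (-1,-1,-1,1), (-1,-1,-1,-1)]"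

fun qof :: "int \<times> int \<times> int \<times> int \<Rightarrow> quat" where
  "qof (a,b,c,d) = Quat (of_int a / 2) (of_int b / 2) (of_int c / 2) (of_int d / 2)"

fun imul :: "int \<times> int \<times> int \<times> int \<Rightarrow> int \<times> int \<times> int \<times> int \<Rightarrow> int \<times> int \<times> int \<times> int" where
  "imul (a,b,c,d) (e,f,g,h) = (a*e - b*f - c*g - d*h, a*f + b*e + c*h - d*g, a*g - b*h + c*e + d*f, a*h + b*g - c*f + d*e)"

fun ihalf :: "int \<times> int \<times> int \<times> int \<Rightarrow> int \<times> int \<times> int \<times> int" where
  "ihalf (a,b,c,d) = (a div 2, b div 2, c div 2, d div 2)"

fun ieven :: "int \<times> int \<times> int \<times> int \<Rightarrow> bool" where
  "ieven (a,b,c,d) = (even a \<and> even b \<and> even c \<and> even d)"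

lemma Hint_check: "list_all (\<lambda>x. list_all (\<lambda>y. ieven (imul x y) \<and> ihalf (imul x y) \<in> set Hint) Hint) Hint"
  unfolding Hint_def by code_simp

fun icnj :: "int \<times> int \<times> int \<times> int \<Rightarrow> int \<times> int \<times> int \<times> int" where
  "icnj (a,b,c,d) = (a, -b, -c, -d)"

fun idiv8 :: "int \<times> int \<times> int \<times> int \<Rightarrow> bool" where
  "idiv8 (a,b,c,d) = (a mod 8 = 0 \<and> b mod 8 = 0 \<and> c mod 8 = 0 \<and> d mod 8 = 0)"

definition Ebasis :: "(int \<times> int \<times> int \<times> int) list" where
  "Ebasis = [(2,0,0,0),(0,2,0,0),(0,0,2,0),(0,0,0,2)]"

lemma Hint_check2: "list_all (\<lambda>x. icnj x \<in> set Hint \<and> imul (icnj x) x = (4,0,0,0) \<and> imul x (icnj x) = (4,0,0,0) \<and> list_all (\<lambda>e. idiv8 (imul (imul x e) (icnj x))) Ebasis) Hint"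
  unfolding Hint_def Ebasis_def by code_simp

lemma even_div2: "even (n::int) \<Longrightarrow> (of_int (n div 2) :: real) = of_int n / 2"
  by (elim evenE) simp

lemma mod8_div: "(n::int) mod 8 = 0 \<Longrightarrow> (of_int n :: real) / 8 \<in> \<int>"
  by (metis Ints_of_int mod_0_imp_dvd dvd_div_mult_self of_int_mult of_int_numeral
        nonzero_mult_div_cancel_right zero_neq_numeral)

lemma qof_mult: "ieven (imul x y) \<Longrightarrow> qof x * qof y = qof (ihalf (imul x y))"
  apply (cases x; cases y)
  apply (simp add: quat_eq_iff even_div2)
  done

lemma qof_cnj: "cnj (qof x) = qof (icnj x)" by (cases x) (simp add: quat_eq_iff)

lemma qof_conj_basis: "qof x * qof e * qof (icnj x) =
   (case imul (imul x e) (icnj x) of (a,b,c,d) \<Rightarrow> Quat (of_int a / 8) (of_int b / 8) (of_int c / 8) (of_int d / 8))"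
  apply (cases x; cases e)
  apply (simp add: quat_eq_iff)
  apply (simp add: field_simps)
  done

lemma HL_Hint: "set HL = qof ` set Hint"
  unfolding HL_def Hint_def by simp

lemma hurwitz_Hint: "hurwitz_units = qof ` set Hint"
  using hurwitz_units_HL HL_Hint by simp

lemma hur_mult: "u \<in> hurwitz_units \<Longrightarrow> v \<in> hurwitz_units \<Longrightarrow> u * v \<in> hurwitz_units"
proof -
  assume "u \<in> hurwitz_units" "v \<in> hurwitz_units"
  then obtain x y where xy: "x \<in> set Hint" "y \<in> set Hint" "u = qof x" "v = qof y"
    unfolding hurwitz_Hint by blast
  then have "ieven (imul x y)" "ihalf (imul x y) \<in> set Hint"
    using Hint_check unfolding list_all_iff by auto
  then show ?thesis using xy qof_mult unfolding hurwitz_Hint by auto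
qed

lemma hur_cnj_norm: "u \<in> hurwitz_units \<Longrightarrow> cnj u \<in> hurwitz_units \<and> cnj u * u = 1 \<and> u * cnj u = 1"
proof -
  assume "u \<in> hurwitz_units"
  then obtain x where x: "x \<in> set Hint" "u = qof x"
    unfolding hurwitz_Hint by blast
  then have h: "icnj x \<in> set Hint" "imul (icnj x) x = (4,0,0,0)" "imul x (icnj x) = (4,0,0,0)"
    using Hint_check2 unfolding list_all_iff by auto
  have "cnj u * u = qof (ihalf (imul (icnj x) x))"
    using x h by (simp add: qof_cnj qof_mult del: qof.simps imul.simps)
  also have "\<dots> = 1" using h by (simp add: quat_eq_iff)
  finally have 1: "cnj u * u = 1" .
  have "u * cnj u = qof (ihalf (imul x (icnj x)))"
    using x h by (simp add: qof_cnj qof_mult del: qof.simps imul.simps)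
  also have "\<dots> = 1" using h by (simp add: quat_eq_iff)
  finally have 2: "u * cnj u = 1" .
  show ?thesis using 1 2 x h unfolding hurwitz_Hint by (auto simp: qof_cnj simp del: qof.simps)
qed

lemma lip_hur: "u \<in> lipschitz_units \<Longrightarrow> u \<in> hurwitz_units" using lip_sub by blast



fun mstar :: "qmat \<Rightarrow> qmat" where
  "mstar (QM a b c d) = QM (cnj a) (cnj c) (cnj b) (cnj d)"

lemma Tm_QM: "Tm = QM 0 1 1 0" by (simp add: Tm_def qops)
lemma taum_QM: "taum w = QM 1 w 0 1" by (simp add: taum_def qops)
lemma Dm_QM: "Dm u = QM u 0 0 u" by (simp add: Dm_def qops)

lemma mstar_mmul: "mstar (mmul M N) = mmul (mstar N) (mstar M)"
  by (cases M; cases N) (simp add: cnj_add cnj_mult)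

definition JU :: "qmat \<Rightarrow> bool" where "JU M \<longleftrightarrow> mmul (mstar M) (mmul Tm M) = Tm"

lemma JU_mmul: "JU M \<Longrightarrow> JU N \<Longrightarrow> JU (mmul M N)"
  unfolding JU_def mstar_mmul by (metis mmul_assoc)

lemma JU_Tm: "JU Tm" unfolding JU_def Tm_QM by simp
lemma JU_mid: "JU mid" unfolding JU_def Tm_QM mid_QM by simp

lemma JU_taum: "w \<in> ImHZ \<Longrightarrow> JU (taum w)"
  unfolding JU_def Tm_QM taum_QM ImHZ_def by (auto simp: quat_eq_iff)

lemma JU_Dm: "cnj u * u = 1 \<Longrightarrow> JU (Dm u)"
  unfolding JU_def Tm_QM Dm_QM by simp

definition lint :: "quat \<Rightarrow> bool" where
  "lint q \<longleftrightarrow> qre q \<in> \<int> \<and> qi q \<in> \<int> \<and> qj q \<in> \<int> \<and> qk q \<in> \<int>"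

lemma lint_add: "lint p \<Longrightarrow> lint q \<Longrightarrow> lint (p + q)" unfolding lint_def by auto
lemma lint_mult: "lint p \<Longrightarrow> lint q \<Longrightarrow> lint (p * q)" unfolding lint_def by auto
lemma lint_0: "lint 0" and lint_1: "lint 1" unfolding lint_def by auto
lemma lint_lip: "u \<in> lipschitz_units \<Longrightarrow> lint u" unfolding lint_def lipschitz_units_def by auto
lemma lint_ImHZ: "w \<in> ImHZ \<Longrightarrow> lint w" unfolding lint_def ImHZ_def by auto

fun LI :: "qmat \<Rightarrow> bool" where "LI (QM a b c d) \<longleftrightarrow> lint a \<and> lint b \<and> lint c \<and> lint d"

lemma LI_mmul: "LI M \<Longrightarrow> LI N \<Longrightarrow> LI (mmul M N)"
  by (cases M; cases N) (simp add: lint_add lint_mult)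

definition goodL :: "qmat \<Rightarrow> bool" where "goodL M \<longleftrightarrow> JU M \<and> LI M"

lemma goodL_mmul: "goodL M \<Longrightarrow> goodL N \<Longrightarrow> goodL (mmul M N)"
  unfolding goodL_def using JU_mmul LI_mmul by blast

lemma goodL_Tm: "goodL Tm" unfolding goodL_def using JU_Tm by (simp add: Tm_QM lint_0 lint_1)
lemma goodL_mid: "goodL mid" unfolding goodL_def using JU_mid by (simp add: mid_QM lint_0 lint_1)
lemma goodL_taum: "w \<in> ImHZ \<Longrightarrow> goodL (taum w)"
  unfolding goodL_def using JU_taum by (simp add: taum_QM lint_0 lint_1 lint_ImHZ)

lemma ImHZ_neg: "w \<in> ImHZ \<Longrightarrow> - w \<in> ImHZ"
  unfolding ImHZ_def
  apply clarify
  subgoal for b c d by (rule exI[of _ "-b"], rule exI[of _ "-c"], rule exI[of _ "-d"]) (simp add: quat_eq_iff)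
  done

lemma taum_inv: "mmul (taum w) (taum (- w)) = mid" "mmul (taum (- w)) (taum w) = mid"
  by (simp_all add: taum_QM mid_QM)

lemma Tm_inv: "mmul Tm Tm = mid" by (simp add: Tm_QM mid_QM)

lemma Dm_mult: "mmul (Dm u) (Dm v) = Dm (u * v)" by (simp add: Dm_QM)

lemma Dm_1: "Dm 1 = mid" by (simp add: Dm_QM mid_QM)

lemma Tm_Dm_comm: "mmul Tm (Dm u) = mmul (Dm u) Tm" by (simp add: Dm_QM Tm_QM)



lemma mob_fix: "mob (QM a b c d) qone = qone \<Longrightarrow> a + b = c + d"
proof -
  assume h: "mob (QM a b c d) qone = qone"
  then have h': "(a + b) * qinv (c + d) = 1" by (simp add: qops)
  show ?thesis
  proof (cases "c + d = 0")
    case True then show ?thesis using h' by (simp add: qinv_0)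
  next
    case False
    have "a + b = (a + b) * (qinv (c + d) * (c + d))" using qinv_left[OF False] by simp
    also have "\<dots> = c + d" using h' by (simp add: mult.assoc[symmetric])
    finally show ?thesis .
  qed
qed

lemma double_one: assumes "(y::quat) + y = 1 + 1" shows "y = 1"
proof -
  have "qre (y + y) = qre (1 + 1)" "qi (y + y) = qi (1 + 1)" "qj (y + y) = qj (1 + 1)" "qk (y + y) = qk (1 + 1)"
    using assms by (rule arg_cong)+
  then have "qre y + qre y = 1 + 1" "qi y + qi y = 0 + 0" "qj y + qj y = 0 + 0" "qk y + qk y = 0 + 0"
    by (simp_all only: qsel_simps)
  then show ?thesis by (simp add: quat_eq_iff)
qed
lemma double_zero: "(y::quat) + y = 0 \<Longrightarrow> y = 0" by (simp add: quat_eq_iff)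

lemma classify:
  assumes J: "JU (QM a b c d)" and hs: "a + b = c + d"
  shows "c = b \<and> d = a \<and> cnj a * a + cnj b * b = 1"
proof -
  from J have h1: "cnj a * c + cnj c * a = 0" and h2: "cnj a * d + cnj c * b = 1"
    and h3: "cnj b * c + cnj d * a = 1" and h4: "cnj b * d + cnj d * b = 0"
    unfolding JU_def Tm_QM by simp_all
  define s where "s = c + d"
  have hs': "a + b = s" using hs s_def by simp
  have "cnj (a+b) * (c+d) + cnj (c+d) * (a+b) = (cnj a * c + cnj c * a) + (cnj a * d + cnj c * b) + (cnj b * c + cnj d * a) + (cnj b * d + cnj d * b)"
    by (simp add: cnj_add algebra_simps)
  also have "\<dots> = 1 + 1" using h1 h2 h3 h4 by simp
  finally have "cnj s * s + cnj s * s = 1 + 1" using hs' s_def by simp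
  then have X: "cnj s * s = 1" by (rule double_one)
  then have X': "s * cnj s = 1" using cnj_mult_self[of s] by simp
  have "cnj (c+d) * (a - b) + cnj (a+b) * (c - d) = (cnj a * c + cnj c * a) - (cnj a * d + cnj c * b) + (cnj b * c + cnj d * a) - (cnj b * d + cnj d * b)"
    by (simp add: cnj_add algebra_simps)
  also have "\<dots> = 0" using h1 h2 h3 h4 by simp
  finally have "cnj s * ((a - b) + (c - d)) = 0" using hs' s_def by (simp add: distrib_left)
  then have "s * cnj s * ((a - b) + (c - d)) = 0" by (simp add: mult.assoc)
  then have z: "(a - b) + (c - d) = 0" using X' by simp
  have cb: "c = b" and da: "d = a" using z hs by (simp_all add: quat_eq_iff)
  show ?thesis using cb da h2 by simp
qed

lemma lint_normsq: "lint q \<Longrightarrow> \<exists>n::int. qnormsq q = of_int n \<and> n \<ge> 0"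
proof -
  assume "lint q"
  then obtain n0 n1 n2 n3 :: int where "qre q = of_int n0" "qi q = of_int n1" "qj q = of_int n2" "qk q = of_int n3"
    unfolding lint_def by (auto elim!: Ints_cases)
  then show ?thesis unfolding qnormsq_def
    by (intro exI[of _ "n0\<^sup>2+n1\<^sup>2+n2\<^sup>2+n3\<^sup>2"]) simp
qed

lemma normsq_0: "qnormsq q = 0 \<Longrightarrow> q = 0"
  unfolding qnormsq_def by (simp add: quat_eq_iff add_nonneg_eq_0_iff)

lemma int_sq_le1: "(n::int)^2 \<le> 1 \<Longrightarrow> n = -1 \<or> n = 0 \<or> n = 1"
proof -
  assume "n^2 \<le> 1"
  then have "\<bar>n\<bar> \<le> 1" using abs_le_square_iff[of n 1] by simp
  then show ?thesis by auto
qed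

lemma normsq_1: "lint q \<Longrightarrow> qnormsq q = 1 \<Longrightarrow> q \<in> lipschitz_units"
proof -
  assume "lint q" "qnormsq q = 1"
  then obtain n0 n1 n2 n3 :: int where q: "q = Quat (of_int n0) (of_int n1) (of_int n2) (of_int n3)"
    and n: "n0\<^sup>2+n1\<^sup>2+n2\<^sup>2+n3\<^sup>2 = 1"
    unfolding lint_def qnormsq_def
    apply (auto elim!: Ints_cases)
    by (metis (mono_tags, opaque_lifting) of_int_1 of_int_add of_int_eq_iff of_int_power quat.collapse)
  have "n0\<^sup>2 \<le> 1" "n1\<^sup>2 \<le> 1" "n2\<^sup>2 \<le> 1" "n3\<^sup>2 \<le> 1" using n
    by (smt (verit) zero_le_power2)+
  then have "n0 = -1 \<or> n0 = 0 \<or> n0 = 1" "n1 = -1 \<or> n1 = 0 \<or> n1 = 1" "n2 = -1 \<or> n2 = 0 \<or> n2 = 1" "n3 = -1 \<or> n3 = 0 \<or> n3 = 1"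
    using int_sq_le1 by blast+
  then show ?thesis using n unfolding q lipschitz_units_def by (elim disjE; simp)
qed

lemma classify_L:
  assumes "goodL (QM a b c d)" "a + b = c + d"
  shows "c = b \<and> d = a \<and> ((a = 0 \<and> b \<in> lipschitz_units) \<or> (b = 0 \<and> a \<in> lipschitz_units))"
proof -
  from assms classify have cb: "c = b" "d = a" and e: "cnj a * a + cnj b * b = 1"
    unfolding goodL_def by blast+
  have la: "lint a" and lb: "lint b" using assms(1) unfolding goodL_def by auto
  from e have n: "qnormsq a + qnormsq b = 1"
    unfolding cnj_mult_self by (simp add: quat_eq_iff)
  obtain m n' :: int where m: "qnormsq a = of_int m" "m \<ge> 0" and n': "qnormsq b = of_int n'" "n' \<ge> 0"
    using lint_normsq[OF la] lint_normsq[OF lb] by blast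
  have "m + n' = 1" using n m n' by (metis of_int_1 of_int_add of_int_eq_iff)
  then have "(m = 0 \<and> n' = 1) \<or> (m = 1 \<and> n' = 0)" using m n' by auto
  then show ?thesis using cb m n' normsq_0 normsq_1 la lb by auto
qed



definition unitset :: "quat set \<Rightarrow> bool" where
  "unitset U \<longleftrightarrow> 1 \<in> U \<and> (\<forall>u\<in>U. \<forall>v\<in>U. u * v \<in> U) \<and> (\<forall>u\<in>U. cnj u \<in> U \<and> cnj u * u = 1 \<and> u * cnj u = 1)"

lemma lip_cnj: "u \<in> lipschitz_units \<Longrightarrow> cnj u \<in> lipschitz_units"
  unfolding lipschitz_units_def by (auto simp: cnj_Quat)

lemma unitset_hur: "unitset hurwitz_units"
  unfolding unitset_def using hur_mult hur_cnj_norm lip_hur[of 1]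
  by (auto simp: lipschitz_units_def qops[symmetric] qone_def)

lemma unitset_lip: "unitset lipschitz_units"
  unfolding unitset_def using lip_mult lip_cnj hur_cnj_norm lip_hur
  by (auto simp: lipschitz_units_def qops[symmetric] qone_def)

definition DU :: "quat set \<Rightarrow> qmat set set" where
  "DU U = {cls (Dm u) | u. u \<in> U}"

definition SU :: "quat set \<Rightarrow> qmat set set" where
  "SU U = DU U \<union> {cls (mmul Tm (Dm u)) | u. u \<in> U}"

lemma UL_DU: "UL = DU lipschitz_units" unfolding UL_def DU_def by simp
lemma UH_DU: "UH = DU hurwitz_units" unfolding UH_def DU_def by simp

lemma Dm_inv: "cnj u * u = 1 \<Longrightarrow> u * cnj u = 1 \<Longrightarrow> mmul (Dm u) (Dm (cnj u)) = mid \<and> mmul (Dm (cnj u)) (Dm u) = mid"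
  by (simp add: Dm_mult Dm_1)

lemma TDm_inv: "cnj u * u = 1 \<Longrightarrow> u * cnj u = 1 \<Longrightarrow>
   mmul (mmul Tm (Dm u)) (mmul Tm (Dm (cnj u))) = mid \<and> mmul (mmul Tm (Dm (cnj u))) (mmul Tm (Dm u)) = mid"
  by (simp add: Dm_QM Tm_QM mid_QM)

lemma cls_Dm_carrier: "unitset U \<Longrightarrow> u \<in> U \<Longrightarrow> cls (Dm u) \<in> carrier PGL"
  unfolding unitset_def by (meson Dm_inv cls_in_carrier)

lemma cls_TDm_carrier: "unitset U \<Longrightarrow> u \<in> U \<Longrightarrow> cls (mmul Tm (Dm u)) \<in> carrier PGL"
  unfolding unitset_def by (meson TDm_inv cls_in_carrier)

lemma cls_Tm_carrier: "cls Tm \<in> carrier PGL" using Tm_inv cls_in_carrier by blast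

lemma inv_Dm: "unitset U \<Longrightarrow> u \<in> U \<Longrightarrow> inv\<^bsub>PGL\<^esub> cls (Dm u) = cls (Dm (cnj u))"
  unfolding unitset_def by (meson Dm_inv inv_cls)

lemma inv_TDm: "unitset U \<Longrightarrow> u \<in> U \<Longrightarrow> inv\<^bsub>PGL\<^esub> cls (mmul Tm (Dm u)) = cls (mmul Tm (Dm (cnj u)))"
  unfolding unitset_def by (meson TDm_inv inv_cls)

lemma prod_simps:
  "mmul (Dm u) (Dm v) = Dm (u * v)"
  "mmul (Dm u) (mmul Tm (Dm v)) = mmul Tm (Dm (u * v))"
  "mmul (mmul Tm (Dm u)) (Dm v) = mmul Tm (Dm (u * v))"
  "mmul (mmul Tm (Dm u)) (mmul Tm (Dm v)) = Dm (u * v)"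
  by (simp_all add: Dm_QM Tm_QM)

lemma DU_subgroup: "unitset U \<Longrightarrow> subgroup (DU U) PGL"
proof -
  assume U: "unitset U"
  show ?thesis
  proof (rule P.subgroupI)
    show "DU U \<subseteq> carrier PGL" unfolding DU_def using cls_Dm_carrier[OF U] by blast
    show "DU U \<noteq> {}" using U unfolding DU_def unitset_def by blast
    fix a b assume "a \<in> DU U" "b \<in> DU U"
    then obtain u v where "a = cls (Dm u)" "b = cls (Dm v)" "u \<in> U" "v \<in> U" unfolding DU_def by blast
    then show "inv\<^bsub>PGL\<^esub> a \<in> DU U" "a \<otimes>\<^bsub>PGL\<^esub> b \<in> DU U"
      using U inv_Dm[OF U] unfolding DU_def unitset_def by (auto simp: prod_simps)
  qed
qed

lemma SU_subgroup: "unitset U \<Longrightarrow> subgroup (SU U) PGL"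
proof -
  assume U: "unitset U"
  show ?thesis
  proof (rule P.subgroupI)
    show "SU U \<subseteq> carrier PGL" unfolding SU_def DU_def using cls_Dm_carrier[OF U] cls_TDm_carrier[OF U] by blast
    show "SU U \<noteq> {}" using U unfolding SU_def DU_def unitset_def by blast
  next
    fix a assume "a \<in> SU U"
    then consider u where "a = cls (Dm u)" "u \<in> U" | u where "a = cls (mmul Tm (Dm u))" "u \<in> U"
      unfolding SU_def DU_def by blast
    then show "inv\<^bsub>PGL\<^esub> a \<in> SU U"
    proof cases
      case 1 then show ?thesis using U inv_Dm[OF U] unfolding SU_def DU_def unitset_def by auto
    next
      case 2 then show ?thesis using U inv_TDm[OF U] unfolding SU_def DU_def unitset_def by auto
    qed
  next
    fix a b assume "a \<in> SU U" "b \<in> SU U"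
    then consider u v where "a = cls (Dm u)" "b = cls (Dm v)" "u \<in> U" "v \<in> U"
      | u v where "a = cls (Dm u)" "b = cls (mmul Tm (Dm v))" "u \<in> U" "v \<in> U"
      | u v where "a = cls (mmul Tm (Dm u))" "b = cls (Dm v)" "u \<in> U" "v \<in> U"
      | u v where "a = cls (mmul Tm (Dm u))" "b = cls (mmul Tm (Dm v))" "u \<in> U" "v \<in> U"
      unfolding SU_def DU_def by blast
    then show "a \<otimes>\<^bsub>PGL\<^esub> b \<in> SU U"
    proof cases
      case 1
      then have "a \<otimes>\<^bsub>PGL\<^esub> b = cls (Dm (u * v))" "u * v \<in> U" using U by (auto simp: prod_simps unitset_def)
      then show ?thesis unfolding SU_def DU_def by blast
    next
      case 2
      then have "a \<otimes>\<^bsub>PGL\<^esub> b = cls (mmul Tm (Dm (u * v)))" "u * v \<in> U" using U by (auto simp: prod_simps unitset_def)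
      then show ?thesis unfolding SU_def DU_def by blast
    next
      case 3
      then have "a \<otimes>\<^bsub>PGL\<^esub> b = cls (mmul Tm (Dm (u * v)))" "u * v \<in> U" using U by (auto simp: prod_simps unitset_def)
      then show ?thesis unfolding SU_def DU_def by blast
    next
      case 4
      then have "a \<otimes>\<^bsub>PGL\<^esub> b = cls (Dm (u * v))" "u * v \<in> U" using U by (auto simp: prod_simps unitset_def)
      then show ?thesis unfolding SU_def DU_def by blast
    qed
  qed
qed

lemma generate_SU: "unitset U \<Longrightarrow> generate PGL ({cls Tm} \<union> DU U) = SU U"
proof
  assume U: "unitset U"
  show "generate PGL ({cls Tm} \<union> DU U) \<subseteq> SU U"
  proof (rule P.generate_subgroup_incl[OF _ SU_subgroup[OF U]])
    have "cls Tm = cls (mmul Tm (Dm 1))" by (simp add: Dm_1)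
    then show "{cls Tm} \<union> DU U \<subseteq> SU U" using U unfolding SU_def unitset_def by auto
  qed
  show "SU U \<subseteq> generate PGL ({cls Tm} \<union> DU U)"
  proof
    fix a assume "a \<in> SU U"
    then consider u where "a = cls (Dm u)" "u \<in> U" | u where "a = cls (mmul Tm (Dm u))" "u \<in> U"
      unfolding SU_def DU_def by blast
    then show "a \<in> generate PGL ({cls Tm} \<union> DU U)"
    proof cases
      case 1 then show ?thesis by (auto intro: generate.incl simp: DU_def)
    next
      case 2
      have a: "a = cls Tm \<otimes>\<^bsub>PGL\<^esub> cls (Dm u)" using 2 by simp
      have "cls Tm \<in> generate PGL ({cls Tm} \<union> DU U)" by (rule generate.incl) simp
      moreover have "cls (Dm u) \<in> generate PGL ({cls Tm} \<union> DU U)"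
        by (rule generate.incl) (use 2 in \<open>auto simp: DU_def\<close>)
      ultimately show ?thesis unfolding a by (rule generate.eng)
    qed
  qed
qed

lemma qinv_right: "q \<noteq> 0 \<Longrightarrow> q * qinv q = 1"
proof -
  assume "q \<noteq> 0"
  hence n: "qnormsq q \<noteq> 0" unfolding qnormsq_def
    by (auto simp: quat_eq_iff add_nonneg_eq_0_iff)
  have "q * qinv q = q * (cnj q * qreal (1 / qnormsq q))"
    by (simp add: qinv_eq qreal_comm)
  also have "\<dots> = (q * cnj q) * qreal (1 / qnormsq q)" by (simp add: mult.assoc)
  also have "\<dots> = 1" using n by (simp add: qreal_mult cnj_mult_self)
  finally show ?thesis .
qed

lemma scaled_unit_nz: "r \<noteq> 0 \<Longrightarrow> cnj u * u = 1 \<Longrightarrow> qreal r * u \<noteq> 0"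
proof
  assume "r \<noteq> 0" "cnj u * u = 1" "qreal r * u = 0"
  then have "qreal (1/r) * (qreal r * u) = 0" by simp
  then have "u = 0" using \<open>r \<noteq> 0\<close> by (simp add: mult.assoc[symmetric] qreal_mult)
  then show False using \<open>cnj u * u = 1\<close> by simp
qed

lemma TDm_QM: "mmul Tm (Dm u) = QM 0 u u 0" by (simp add: Tm_QM Dm_QM)

lemma SU_fix: "unitset U \<Longrightarrow> A \<in> SU U \<Longrightarrow> \<forall>m\<in>A. mob m qone = qone"
proof
  fix m assume U: "unitset U" and A: "A \<in> SU U" and m: "m \<in> A"
  from A consider u where "A = cls (Dm u)" "u \<in> U" | u where "A = cls (mmul Tm (Dm u))" "u \<in> U"
    unfolding SU_def DU_def by blast
  then obtain u where u: "u \<in> U" and "A = cls (Dm u) \<or> A = cls (QM 0 u u 0)"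
    using TDm_QM by metis
  with m obtain r where r: "r \<noteq> 0" and "m = mscale r (Dm u) \<or> m = mscale r (QM 0 u u 0)"
    unfolding cls_def by blast
  moreover have nz: "qreal r * u \<noteq> 0" using scaled_unit_nz[OF r] U u unfolding unitset_def by blast
  ultimately show "mob m qone = qone"
    using qinv_right[OF nz] by (auto simp: Dm_QM qops)
qed

lemma cls_eqD: "cls M = cls N \<Longrightarrow> \<exists>r. r \<noteq> 0 \<and> M = mscale r N"
  using mem_cls[of M] unfolding cls_def by auto

lemma gen_induct:
  assumes "A \<in> generate PGL H"
    and "P mid" and "\<And>M N. P M \<Longrightarrow> P N \<Longrightarrow> P (mmul M N)"
    and "\<And>h. h \<in> H \<Longrightarrow> \<exists>M. h = cls M \<and> P M"
    and "\<And>h. h \<in> H \<Longrightarrow> \<exists>M. inv\<^bsub>PGL\<^esub> h = cls M \<and> P M"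
  shows "\<exists>M. A = cls M \<and> P M"
  using assms(1)
proof induction
  case one then show ?case using assms(2) by auto
next
  case (incl h) then show ?case using assms(4) by blast
next
  case (inv h) then show ?case using assms(5) by blast
next
  case (eng h1 h2)
  then obtain M N where "h1 = cls M" "P M" "h2 = cls N" "P N" by blast
  then show ?case using assms(3) by (intro exI[of _ "mmul M N"]) simp
qed



lemma conj_scal: "u * (qreal r * e) * w = qreal r * (u * e * w)"
  by (metis mult.assoc qreal_comm)

lemma lint_scal: "r \<in> \<int> \<Longrightarrow> lint q \<Longrightarrow> lint (qreal r * q)"
  unfolding lint_def by auto

lemma quat_decomp: "x = qreal (qre x) * qof (2,0,0,0) + qreal (qi x) * qof (0,2,0,0) + qreal (qj x) * qof (0,0,2,0) + qreal (qk x) * qof (0,0,0,2)"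
  by (simp add: quat_eq_iff)

lemma lint_conj_basis: "y \<in> set Hint \<Longrightarrow> e \<in> set Ebasis \<Longrightarrow> lint (qof y * qof e * qof (icnj y))"
proof -
  assume "y \<in> set Hint" "e \<in> set Ebasis"
  then have "idiv8 (imul (imul y e) (icnj y))" using Hint_check2 unfolding list_all_iff by auto
  then show ?thesis unfolding qof_conj_basis
    by (cases "imul (imul y e) (icnj y)") (simp add: lint_def mod8_div)
qed

lemma lint_conj: "lint x \<Longrightarrow> u \<in> hurwitz_units \<Longrightarrow> lint (u * x * cnj u)"
proof -
  assume x: "lint x" and "u \<in> hurwitz_units"
  then obtain y where y: "y \<in> set Hint" "u = qof y" unfolding hurwitz_Hint by blast
  let ?c = "\<lambda>e. qof y * qof e * qof (icnj y)"
  have b: "lint (?c (2,0,0,0))" "lint (?c (0,2,0,0))" "lint (?c (0,0,2,0))" "lint (?c (0,0,0,2))"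
    using lint_conj_basis[OF y(1)] by (simp_all add: Ebasis_def del: qof.simps)
  have "u * x * cnj u = qof y * (qreal (qre x) * qof (2,0,0,0) + qreal (qi x) * qof (0,2,0,0) + qreal (qj x) * qof (0,0,2,0) + qreal (qk x) * qof (0,0,0,2)) * qof (icnj y)"
    using quat_decomp[of x] y(2) qof_cnj[of y] by (simp del: qof.simps)
  also have "\<dots> = qreal (qre x) * ?c (2,0,0,0) + qreal (qi x) * ?c (0,2,0,0) + qreal (qj x) * ?c (0,0,2,0) + qreal (qk x) * ?c (0,0,0,2)"
    by (simp only: distrib_left distrib_right conj_scal)
  finally show ?thesis using x b unfolding lint_def[of x] by (simp add: lint_add lint_scal del: qof.simps)
qed



lemma taum_carrier: "cls (taum w) \<in> carrier PGL" using taum_inv cls_in_carrier by blast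

lemma genL_carrier: "{cls Tm} \<union> {cls (taum w) | w. w \<in> ImHZ} \<subseteq> carrier PGL"
  using cls_Tm_carrier taum_carrier by blast

lemma PSL2L_subgroup: "subgroup PSL2L PGL"
  unfolding PSL2L_def by (rule P.generate_is_subgroup[OF genL_carrier])

lemma inv_Tm: "inv\<^bsub>PGL\<^esub> cls Tm = cls Tm" using Tm_inv inv_cls by blast
lemma inv_taum: "inv\<^bsub>PGL\<^esub> cls (taum w) = cls (taum (- w))" using taum_inv inv_cls by blast

lemma PSL2L_good: "A \<in> PSL2L \<Longrightarrow> \<exists>M. A = cls M \<and> goodL M"
  unfolding PSL2L_def
proof (rule gen_induct)
  show "goodL mid" by (rule goodL_mid)
  show "\<And>M N. goodL M \<Longrightarrow> goodL N \<Longrightarrow> goodL (mmul M N)" by (rule goodL_mmul)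
  fix h assume "h \<in> {cls Tm} \<union> {cls (taum w) |w. w \<in> ImHZ}"
  then show "\<exists>M. h = cls M \<and> goodL M" "\<exists>M. inv\<^bsub>PGL\<^esub> h = cls M \<and> goodL M"
    using goodL_Tm goodL_taum ImHZ_neg inv_Tm inv_taum by auto
qed

lemma Dm_neg: "Dm (- u) = mscale (-1) (Dm u)"
  by (simp add: Dm_QM quat_eq_iff)

lemma cube: "w * w = -1 \<Longrightarrow> mmul (mmul (taum w) Tm) (mmul (mmul (taum w) Tm) (mmul (taum w) Tm)) = Dm w"
  by (simp add: taum_QM Tm_QM Dm_QM algebra_simps)

lemma ImHZ_I: "Quat 0 (of_int b) (of_int c) (of_int d) \<in> ImHZ" unfolding ImHZ_def by blast

lemma PSL2L_Dm_basic: "w \<in> ImHZ \<Longrightarrow> w * w = -1 \<Longrightarrow> cls (Dm w) \<in> PSL2L"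
proof -
  assume w: "w \<in> ImHZ" "w * w = -1"
  have g: "cls (taum w) \<in> PSL2L" "cls Tm \<in> PSL2L" unfolding PSL2L_def using w
    by (auto intro: generate.incl)
  let ?X = "cls (taum w) \<otimes>\<^bsub>PGL\<^esub> cls Tm"
  have X: "?X \<in> PSL2L" using g subgroup.m_closed[OF PSL2L_subgroup] by blast
  have "cls (Dm w) = ?X \<otimes>\<^bsub>PGL\<^esub> (?X \<otimes>\<^bsub>PGL\<^esub> ?X)" using cube[OF w(2)] by simp
  then show ?thesis using X subgroup.m_closed[OF PSL2L_subgroup] by metis
qed

lemma UL_sub: "UL \<subseteq> PSL2L"
proof
  fix A assume "A \<in> UL"
  then obtain u where A: "A = cls (Dm u)" and u: "u \<in> lipschitz_units" unfolding UL_def by blast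
  have one: "cls (Dm 1) \<in> PSL2L" unfolding Dm_1 PSL2L_def using generate.one[of PGL] by simp
  have i: "cls (Dm (Quat 0 1 0 0)) \<in> PSL2L"
    by (rule PSL2L_Dm_basic) (use ImHZ_I[of 1 0 0] in \<open>auto simp: quat_eq_iff\<close>)
  have j: "cls (Dm (Quat 0 0 1 0)) \<in> PSL2L"
    by (rule PSL2L_Dm_basic) (use ImHZ_I[of 0 1 0] in \<open>auto simp: quat_eq_iff\<close>)
  have k: "cls (Dm (Quat 0 0 0 1)) \<in> PSL2L"
    by (rule PSL2L_Dm_basic) (use ImHZ_I[of 0 0 1] in \<open>auto simp: quat_eq_iff\<close>)
  have neg: "cls (Dm (- v)) = cls (Dm v)" for v by (simp add: Dm_neg cls_mscale)
  have e: "Quat 1 0 0 0 = 1" "Quat (-1) 0 0 0 = - 1" "Quat 0 (-1) 0 0 = - Quat 0 1 0 0"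
    "Quat 0 0 (-1) 0 = - Quat 0 0 1 0" "Quat 0 0 0 (-1) = - Quat 0 0 0 1" by (simp_all add: quat_eq_iff)
  from u show "A \<in> PSL2L" unfolding A lipschitz_units_def
    using one i j k by (auto simp: e neg)
qed

lemma genTUL_sub: "generate PGL ({cls Tm} \<union> UL) \<subseteq> PSL2L"
proof (rule P.generate_subgroup_incl[OF _ PSL2L_subgroup])
  have "cls Tm \<in> PSL2L" unfolding PSL2L_def by (auto intro: generate.incl)
  then show "{cls Tm} \<union> UL \<subseteq> PSL2L" using UL_sub by blast
qed

lemma UhatL_SU: "UhatL = SU lipschitz_units"
proof
  show "UhatL \<subseteq> SU lipschitz_units"
  proof
    fix A assume A: "A \<in> UhatL"
    then obtain M where M: "A = cls M" "goodL M" using PSL2L_good unfolding UhatL_def by blast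
    obtain a b c d where Mq: "M = QM a b c d" by (cases M)
    have "mob M qone = qone" using A M(1) mem_cls[of M] unfolding UhatL_def by blast
    then have "a + b = c + d" using Mq mob_fix by simp
    then have "c = b \<and> d = a \<and> ((a = 0 \<and> b \<in> lipschitz_units) \<or> (b = 0 \<and> a \<in> lipschitz_units))"
      using classify_L M(2) Mq by blast
    then show "A \<in> SU lipschitz_units" unfolding SU_def DU_def M(1) Mq
      by (auto simp: TDm_QM[symmetric] Dm_QM[symmetric])
  qed
  show "SU lipschitz_units \<subseteq> UhatL"
    using generate_SU[OF unitset_lip] genTUL_sub SU_fix[OF unitset_lip]
    unfolding UhatL_def UL_DU by blast
qed



definition goodH :: "qmat \<Rightarrow> bool" where
  "goodH N \<longleftrightarrow> (\<exists>M u. N = mmul M (Dm u) \<and> goodL M \<and> u \<in> hurwitz_units)"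

lemma conj_goodL: "goodL M \<Longrightarrow> u \<in> hurwitz_units \<Longrightarrow> goodL (mmul (Dm u) (mmul M (Dm (cnj u))))"
proof -
  assume M: "goodL M" and u: "u \<in> hurwitz_units"
  have n: "cnj u * u = 1" "u * cnj u = 1" using hur_cnj_norm[OF u] by auto
  have J: "JU (mmul (Dm u) (mmul M (Dm (cnj u))))"
    using M n by (intro JU_mmul JU_Dm) (auto simp: goodL_def)
  obtain a b c d where Mq: "M = QM a b c d" by (cases M)
  have "LI M" using M by (simp add: goodL_def)
  then have "LI (mmul (Dm u) (mmul M (Dm (cnj u))))"
    using lint_conj[OF _ u] unfolding Mq by (simp add: Dm_QM mult.assoc)
  then show ?thesis using J by (simp add: goodL_def)
qed

lemma goodH_mmul: "goodH N1 \<Longrightarrow> goodH N2 \<Longrightarrow> goodH (mmul N1 N2)"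
proof -
  assume "goodH N1" "goodH N2"
  then obtain M1 u M2 v where N: "N1 = mmul M1 (Dm u)" "N2 = mmul M2 (Dm v)"
    and g: "goodL M1" "goodL M2" and uv: "u \<in> hurwitz_units" "v \<in> hurwitz_units"
    unfolding goodH_def by blast
  let ?C = "mmul (Dm u) (mmul M2 (Dm (cnj u)))"
  have n: "cnj u * u = 1" using hur_cnj_norm[OF uv(1)] by auto
  have "mmul N1 N2 = mmul (mmul M1 ?C) (Dm (u * v))"
  proof -
    have "mmul (Dm (cnj u)) (Dm (u * v)) = Dm v" using n by (simp add: Dm_mult mult.assoc[symmetric])
    then show ?thesis unfolding N by (simp add: mmul_assoc)
  qed
  moreover have "goodL (mmul M1 ?C)" using goodL_mmul g conj_goodL uv by blast
  moreover have "u * v \<in> hurwitz_units" using hur_mult uv by blast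
  ultimately show ?thesis unfolding goodH_def by blast
qed

lemma goodH_L: "goodL M \<Longrightarrow> goodH M"
  unfolding goodH_def by (rule exI[of _ M], rule exI[of _ 1]) (simp add: Dm_1 unitset_hur[unfolded unitset_def])

lemma goodH_Dm: "u \<in> hurwitz_units \<Longrightarrow> goodH (Dm u)"
  unfolding goodH_def by (rule exI[of _ mid], rule exI[of _ u]) (simp add: goodL_mid)

lemma PSL2H_good: "A \<in> PSL2H \<Longrightarrow> \<exists>N. A = cls N \<and> goodH N"
  unfolding PSL2H_def
proof (rule gen_induct)
  show "goodH mid" using goodH_L goodL_mid by blast
  show "\<And>M N. goodH M \<Longrightarrow> goodH N \<Longrightarrow> goodH (mmul M N)" by (rule goodH_mmul)
  fix h assume h: "h \<in> {cls Tm} \<union> {cls (taum w) |w. w \<in> ImHZ} \<union> UH"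
  have "(\<exists>M. h = cls M \<and> goodH M) \<and> (\<exists>M. inv\<^bsub>PGL\<^esub> h = cls M \<and> goodH M)"
  proof (cases "h \<in> UH")
    case True
    then obtain u where u: "h = cls (Dm u)" "u \<in> hurwitz_units" unfolding UH_def by blast
    then show ?thesis using inv_Dm[OF unitset_hur] goodH_Dm hur_cnj_norm by blast
  next
    case False
    then show ?thesis using h goodL_Tm goodL_taum ImHZ_neg inv_Tm inv_taum goodH_L by auto
  qed
  then show "\<exists>M. h = cls M \<and> goodH M" "\<exists>M. inv\<^bsub>PGL\<^esub> h = cls M \<and> goodH M" by blast+
qed

lemma genTUH_sub: "generate PGL ({cls Tm} \<union> UH) \<subseteq> PSL2H"
  unfolding PSL2H_def by (rule P.mono_generate) blast

lemma UhatH_SU: "UhatH = SU hurwitz_units"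
proof
  show "UhatH \<subseteq> SU hurwitz_units"
  proof
    fix A assume A: "A \<in> UhatH"
    then obtain N where N: "A = cls N" "goodH N" using PSL2H_good unfolding UhatH_def by blast
    then obtain M u where Nq: "N = mmul M (Dm u)" and M: "goodL M" and u: "u \<in> hurwitz_units"
      unfolding goodH_def by blast
    obtain a b c d where Mq: "M = QM a b c d" by (cases M)
    have Nq': "N = QM (a * u) (b * u) (c * u) (d * u)" unfolding Nq Mq by (simp add: Dm_QM)
    have "mob N qone = qone" using A N(1) mem_cls[of N] unfolding UhatH_def by blast
    then have "a * u + b * u = c * u + d * u" using Nq' mob_fix by simp
    then have "(a + b) * u * cnj u = (c + d) * u * cnj u" by (simp add: distrib_right)
    then have "a + b = c + d" using hur_cnj_norm[OF u] by (simp add: mult.assoc)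
    then have "c = b \<and> d = a \<and> ((a = 0 \<and> b \<in> lipschitz_units) \<or> (b = 0 \<and> a \<in> lipschitz_units))"
      using classify_L M Mq by blast
    then consider "N = mmul Tm (Dm (b * u))" "b * u \<in> hurwitz_units" | "N = Dm (a * u)" "a * u \<in> hurwitz_units"
    proof (elim conjE disjE)
      assume "c = b" "d = a" "a = 0" "b \<in> lipschitz_units"
      then have "N = mmul Tm (Dm (b * u))" "b * u \<in> hurwitz_units"
        using u hur_mult lip_hur unfolding Nq' TDm_QM by auto
      then show thesis using that(1) by blast
    next
      assume "c = b" "d = a" "b = 0" "a \<in> lipschitz_units"
      then have "N = Dm (a * u)" "a * u \<in> hurwitz_units"
        using u hur_mult lip_hur unfolding Nq' Dm_QM by auto
      then show thesis using that(2) by blast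
    qed
    then show "A \<in> SU hurwitz_units" unfolding SU_def DU_def N(1) by cases blast+
  qed
  show "SU hurwitz_units \<subseteq> UhatH"
    using generate_SU[OF unitset_hur] genTUH_sub SU_fix[OF unitset_hur]
    unfolding UhatH_def UH_DU by blast
qed

lemma T_comm: "A \<in> UH \<Longrightarrow> cls Tm \<otimes>\<^bsub>PGL\<^esub> A = A \<otimes>\<^bsub>PGL\<^esub> cls Tm"
  unfolding UH_def using Tm_Dm_comm by auto



definition phi :: "int \<times> qmat set \<Rightarrow> qmat set" where
  "phi x = (if fst x = 0 then snd x else cls Tm \<otimes>\<^bsub>PGL\<^esub> snd x)"

lemma DU_nz: "unitset U \<Longrightarrow> u \<in> U \<Longrightarrow> u \<noteq> 0"
  unfolding unitset_def by force

lemma cls_Dm_ne_TDm: "u \<noteq> 0 \<Longrightarrow> cls (Dm u) \<noteq> cls (mmul Tm (Dm v))"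
proof
  assume "u \<noteq> 0" "cls (Dm u) = cls (mmul Tm (Dm v))"
  then obtain r where "Dm u = mscale r (mmul Tm (Dm v))" using cls_eqD by blast
  then have "u = qreal r * 0" unfolding TDm_QM by (simp add: Dm_QM)
  then show False using \<open>u \<noteq> 0\<close> by simp
qed

lemma phi_iso: "unitset U \<Longrightarrow> phi \<in> iso (integer_mod_group 2 \<times>\<times> PGL\<lparr>carrier := DU U\<rparr>) (PGL\<lparr>carrier := SU U\<rparr>)"
proof -
  assume U: "unitset U"
  have car: "carrier (integer_mod_group 2 \<times>\<times> PGL\<lparr>carrier := DU U\<rparr>) = {0, 1} \<times> DU U"
    by (auto simp: DirProd_def carrier_integer_mod_group)
  have phi0: "phi (0, cls (Dm u)) = cls (Dm u)" and phi1: "phi (1, cls (Dm u)) = cls (mmul Tm (Dm u))" for u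
    by (simp_all add: phi_def)
  have hom: "phi \<in> hom (integer_mod_group 2 \<times>\<times> PGL\<lparr>carrier := DU U\<rparr>) (PGL\<lparr>carrier := SU U\<rparr>)"
  proof (rule homI)
    fix x assume "x \<in> carrier (integer_mod_group 2 \<times>\<times> PGL\<lparr>carrier := DU U\<rparr>)"
    then have "x \<in> {0, 1} \<times> DU U" by (simp only: car)
    then obtain e u where x: "x = (e, cls (Dm u))" "e = 0 \<or> e = 1" "u \<in> U"
      unfolding DU_def by blast
    then show "phi x \<in> carrier (PGL\<lparr>carrier := SU U\<rparr>)"
      by (auto simp: phi0 phi1 SU_def DU_def)
  next
    fix x y assume "x \<in> carrier (integer_mod_group 2 \<times>\<times> PGL\<lparr>carrier := DU U\<rparr>)"
      "y \<in> carrier (integer_mod_group 2 \<times>\<times> PGL\<lparr>carrier := DU U\<rparr>)"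
    then have "x \<in> {0, 1} \<times> DU U" "y \<in> {0, 1} \<times> DU U" by (simp_all only: car)
    then obtain e u f v where x: "x = (e, cls (Dm u))" "e = 0 \<or> e = 1" "u \<in> U"
      and y: "y = (f, cls (Dm v))" "f = 0 \<or> f = 1" "v \<in> U"
      unfolding DU_def by blast
    have m: "x \<otimes>\<^bsub>integer_mod_group 2 \<times>\<times> PGL\<lparr>carrier := DU U\<rparr>\<^esub> y = ((e + f) mod 2, cls (Dm (u * v)))"
      using x y by (simp add: DirProd_def prod_simps)
    show "phi (x \<otimes>\<^bsub>integer_mod_group 2 \<times>\<times> PGL\<lparr>carrier := DU U\<rparr>\<^esub> y) = phi x \<otimes>\<^bsub>PGL\<lparr>carrier := SU U\<rparr>\<^esub> phi y"
      unfolding m using x(1,2) y(1,2) by (auto simp: phi_def prod_simps)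
  qed
  have inj: "inj_on phi ({0, 1} \<times> DU U)"
  proof (rule inj_onI)
    fix x y assume "x \<in> {0, 1} \<times> DU U" "y \<in> {0, 1} \<times> DU U" and eq: "phi x = phi y"
    then obtain e u f v where x: "x = (e, cls (Dm u))" "e = 0 \<or> e = 1" "u \<in> U"
      and y: "y = (f, cls (Dm v))" "f = 0 \<or> f = 1" "v \<in> U"
      unfolding DU_def by blast
    have nz: "u \<noteq> 0" "v \<noteq> 0" using DU_nz[OF U] x y by auto
    have cT: "cls Tm \<in> carrier PGL" by (rule cls_Tm_carrier)
    have cu: "cls (Dm u) \<in> carrier PGL" "cls (Dm v) \<in> carrier PGL"
      using cls_Dm_carrier[OF U] x y by auto
    show "x = y"
    proof (cases "e = 0")
      case True
      show ?thesis
      proof (cases "f = 0")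
        case True
        then show ?thesis using eq x y \<open>e = 0\<close> by (simp add: phi_def)
      next
        case False
        then have "cls (Dm u) = cls (mmul Tm (Dm v))" using eq x y \<open>e = 0\<close> by (simp add: phi_def)
        then show ?thesis using cls_Dm_ne_TDm nz by blast
      qed
    next
      case False
      then have e1: "e = 1" using x by blast
      show ?thesis
      proof (cases "f = 0")
        case True
        then have "cls (Dm v) = cls (mmul Tm (Dm u))" using eq x y e1 by (simp add: phi_def)
        then show ?thesis using cls_Dm_ne_TDm nz by blast
      next
        case False
        then have f1: "f = 1" using y by blast
        have "cls Tm \<otimes>\<^bsub>PGL\<^esub> cls (Dm u) = cls Tm \<otimes>\<^bsub>PGL\<^esub> cls (Dm v)"
          using eq x y e1 f1 by (simp add: phi_def del: PGL_simps)
        then have "cls (Dm u) = cls (Dm v)" using P.l_cancel cT cu by blast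
        then show ?thesis using x y e1 f1 by simp
      qed
    qed
  qed
  have img: "phi ` ({0, 1} \<times> DU U) = SU U"
  proof
    show "phi ` ({0, 1} \<times> DU U) \<subseteq> SU U"
      by (auto simp: DU_def SU_def phi0 phi1)
    show "SU U \<subseteq> phi ` ({0, 1} \<times> DU U)"
    proof
      fix A assume "A \<in> SU U"
      then consider u where "A = cls (Dm u)" "u \<in> U" | u where "A = cls (mmul Tm (Dm u))" "u \<in> U"
        unfolding SU_def DU_def by blast
      then show "A \<in> phi ` ({0, 1} \<times> DU U)"
      proof cases
        case 1 then show ?thesis using phi0[of u, symmetric] unfolding DU_def by blast
      next
        case 2 then show ?thesis using phi1[of u, symmetric] unfolding DU_def by blast
      qed
    qed
  qed
  show ?thesis unfolding iso_def using hom inj img car by (simp add: bij_betw_def)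
qed

lemma iso_SU: "unitset U \<Longrightarrow> PGL\<lparr>carrier := SU U\<rparr> \<cong> integer_mod_group 2 \<times>\<times> PGL\<lparr>carrier := DU U\<rparr>"
proof -
  assume U: "unitset U"
  have g: "group (integer_mod_group 2 \<times>\<times> PGL\<lparr>carrier := DU U\<rparr>)"
    by (rule DirProd_group[OF group_integer_mod_group P.subgroup_imp_group[OF DU_subgroup[OF U]]])
  show ?thesis using group.iso_sym[OF g] is_isoI[OF phi_iso[OF U]] by blast
qed

theorem mainTheorem5:
  shows "UhatL = generate PGL ({cls Tm} \<union> UL)
    \<and> UhatH = generate PGL ({cls Tm} \<union> UH)
    \<and> (\<forall>A \<in> UH. cls Tm \<otimes>\<^bsub>PGL\<^esub> A = A \<otimes>\<^bsub>PGL\<^esub> cls Tm)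
    \<and> PGL\<lparr>carrier := UhatL\<rparr> \<cong> integer_mod_group 2 \<times>\<times> PGL\<lparr>carrier := UL\<rparr>
    \<and> PGL\<lparr>carrier := UhatH\<rparr> \<cong> integer_mod_group 2 \<times>\<times> PGL\<lparr>carrier := UH\<rparr>"
  using UhatL_SU UhatH_SU generate_SU[OF unitset_lip] generate_SU[OF unitset_hur]
    T_comm iso_SU[OF unitset_lip] iso_SU[OF unitset_hur]
  unfolding UL_DU UH_DU by simp

end
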